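(* Let $(A,\cdot)$ be a commutative associative algebra and $(A,\circ)$ a Lie-admissible algebra (i.e. $[x,y]=x\circ y-y\circ x$ defines a Lie algebra $(A,[-,-])$) such that for all $x,y,z\in A$: $$2(x\circ y)\cdot z-2(y\circ x)\cdot z=y\cdot(x\circ z)-x\cdot(y\circ z),\qquad 2x\circ(y\cdot z)=(z\cdot x)\circ y+z\cdot(x\circ y).$$ Then $(A,\cdot,[-,-])$ is a transposed Poisson algebra. In particular, if $(A,\cdot,\circ)$ is an anti-pre-Lie Poisson algebra, then $(A,\cdot,[-,-])$ is a transposed Poisson algebra.
   Context: All vector spaces are finite-dimensional over a field $\mathbb F$ of characteristic $0$. A transposed Poisson algebra is $(A,\cdot,[-,-])$ with $(A,\cdot)$ commutative associative, $(A,[-,-])$ a Lie algebra, and $2z\cdot[x,y]=[z\cdot x,y]+[x,z\cdot y]$ for all $x,y,z$. An anti-pre-Lie algebra is $(A,\circ)$ with $x\circ(y\circ z)-y\circ(x\circ z)=[y,x]\circ z$ and $[x,y]\circ z+[y,z]\circ x+[z,x]\circ y=0$; an anti-pre-Lie Poisson algebra is $(A,\cdot,\circ)$ with $(A,\cdot)$ commutative associative, $(A,\circ)$ anti-pre-Lie, satisfying the two displayed identities. *)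

theory Defs
  imports Complex_Main
begin

definition bilinear_op :: "('k::field \<Rightarrow> 'v::ab_group_add \<Rightarrow> 'v) \<Rightarrow> ('v \<Rightarrow> 'v \<Rightarrow> 'v) \<Rightarrow> bool" where
  "bilinear_op sc p \<longleftrightarrow>
     (\<forall>x y z. p (x + y) z = p x z + p y z) \<and>
     (\<forall>x y z. p x (y + z) = p x y + p x z) \<and>
     (\<forall>a x y. p (sc a x) y = sc a (p x y)) \<and>
     (\<forall>a x y. p x (sc a y) = sc a (p x y))"

definition comm_assoc_alg :: "('k::field \<Rightarrow> 'v::ab_group_add \<Rightarrow> 'v) \<Rightarrow> ('v \<Rightarrow> 'v \<Rightarrow> 'v) \<Rightarrow> bool" where
  "comm_assoc_alg sc m \<longleftrightarrow> bilinear_op sc m \<and>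
     (\<forall>x y. m x y = m y x) \<and> (\<forall>x y z. m (m x y) z = m x (m y z))"

definition lie_alg :: "('k::field \<Rightarrow> 'v::ab_group_add \<Rightarrow> 'v) \<Rightarrow> ('v \<Rightarrow> 'v \<Rightarrow> 'v) \<Rightarrow> bool" where
  "lie_alg sc br \<longleftrightarrow> bilinear_op sc br \<and>
     (\<forall>x. br x x = 0) \<and>
     (\<forall>x y z. br x (br y z) + br y (br z x) + br z (br x y) = 0)"

definition commutator :: "('v::ab_group_add \<Rightarrow> 'v \<Rightarrow> 'v) \<Rightarrow> 'v \<Rightarrow> 'v \<Rightarrow> 'v" where
  "commutator c x y = c x y - c y x"

definition lie_admissible :: "('k::field \<Rightarrow> 'v::ab_group_add \<Rightarrow> 'v) \<Rightarrow> ('v \<Rightarrow> 'v \<Rightarrow> 'v) \<Rightarrow> bool" where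
  "lie_admissible sc c \<longleftrightarrow> bilinear_op sc c \<and> lie_alg sc (commutator c)"

definition transposed_poisson :: "('k::field \<Rightarrow> 'v::ab_group_add \<Rightarrow> 'v) \<Rightarrow> ('v \<Rightarrow> 'v \<Rightarrow> 'v) \<Rightarrow> ('v \<Rightarrow> 'v \<Rightarrow> 'v) \<Rightarrow> bool" where
  "transposed_poisson sc m br \<longleftrightarrow> comm_assoc_alg sc m \<and> lie_alg sc br \<and>
     (\<forall>x y z. sc 2 (m z (br x y)) = br (m z x) y + br x (m z y))"

definition anti_pre_lie :: "('k::field \<Rightarrow> 'v::ab_group_add \<Rightarrow> 'v) \<Rightarrow> ('v \<Rightarrow> 'v \<Rightarrow> 'v) \<Rightarrow> bool" where
  "anti_pre_lie sc c \<longleftrightarrow> bilinear_op sc c \<and>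
     (\<forall>x y z. c x (c y z) - c y (c x z) = c (commutator c y x) z) \<and>
     (\<forall>x y z. c (commutator c x y) z + c (commutator c y z) x + c (commutator c z x) y = 0)"

definition anti_pre_lie_poisson :: "('k::field \<Rightarrow> 'v::ab_group_add \<Rightarrow> 'v) \<Rightarrow> ('v \<Rightarrow> 'v \<Rightarrow> 'v) \<Rightarrow> ('v \<Rightarrow> 'v \<Rightarrow> 'v) \<Rightarrow> bool" where
  "anti_pre_lie_poisson sc m c \<longleftrightarrow> comm_assoc_alg sc m \<and> anti_pre_lie sc c \<and>
     (\<forall>x y z. sc 2 (m (c x y) z) - sc 2 (m (c y x) z) = m y (c x z) - m x (c y z)) \<and>
     (\<forall>x y z. sc 2 (c x (m y z)) = c (m z x) y + m z (c x y))"

end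

theory Submission
  imports Defs
begin

lemma add_diff_hom:
  fixes f :: "'u::ab_group_add \<Rightarrow> 'v::ab_group_add"
  assumes "\<And>a b. f (a + b) = f a + f b"
  shows "f (a - b) = f a - f b"
proof -
  have "f (a - b + b) = f (a - b) + f b" by (rule assms)
  hence "f a = f (a - b) + f b" by simp
  thus ?thesis by (simp add: eq_diff_eq)
qed

lemma sc_two:
  assumes "vector_space sc"
  shows "sc (2::'k::field) v = v + (v::'v::ab_group_add)"
proof -
  interpret vs: vector_space sc by fact
  have "sc (1 + 1) v = sc 1 v + sc 1 v" by (rule vs.scale_left_distrib)
  thus ?thesis by (simp add: one_add_one)
qed

lemma key:
  fixes sc :: "'k::field_char_0 \<Rightarrow> 'v::ab_group_add \<Rightarrow> 'v"
  assumes vs: "vector_space sc"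
    and mc: "comm_assoc_alg sc m" and cb: "bilinear_op sc c"
    and h1: "\<forall>x y z. sc 2 (m (c x y) z) - sc 2 (m (c y x) z) = m y (c x z) - m x (c y z)"
    and h2: "\<forall>x y z. sc 2 (c x (m y z)) = c (m z x) y + m z (c x y)"
  shows "sc 2 (m z (commutator c x y)) = commutator c (m z x) y + commutator c x (m z y)"
proof -
  interpret v: vector_space sc by fact
  have comm: "\<And>a b. m a b = m b a" using mc unfolding comm_assoc_alg_def by blast
  have madd: "\<And>a b d. m d (a + b) = m d a + m d b" using mc unfolding comm_assoc_alg_def bilinear_op_def by blast
  have mdiff: "\<And>a b d. m d (a - b) = m d a - m d b" by (rule add_diff_hom) (rule madd)
  have s2: "\<And>v. sc 2 v = v + v" by (rule sc_two[OF vs])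
  define A where "A = c x (m y z)"
  define B where "B = c y (m x z)"
  define P where "P = m z (c x y)"
  define Q where "Q = m z (c y x)"
  have e1: "c (m z x) y = A + A - P" using h2[rule_format, of x y z] unfolding A_def P_def s2 by (simp add: algebra_simps)
  have e2: "c (m z y) x = B + B - Q" using h2[rule_format, of y x z] unfolding B_def Q_def s2 by (simp add: algebra_simps)
  have e3: "A + A = c (m y x) z + m y (c x z)" using h2[rule_format, of x z y] unfolding A_def s2 by (simp add: comm)
  have e4: "B + B = c (m x y) z + m x (c y z)" using h2[rule_format, of y z x] unfolding B_def s2 by (simp add: comm)
  have e5: "(P + P) - (Q + Q) = m y (c x z) - m x (c y z)" using h1[rule_format, of x y z] unfolding P_def Q_def s2 by (simp add: comm)
  have "(A - B) + (A - B) = (P - Q) + (P - Q)"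
  proof -
    have "(A - B) + (A - B) = (A + A) - (B + B)" by (simp add: algebra_simps)
    also have "\<dots> = m y (c x z) - m x (c y z)" using e3 e4 comm[of y x] by (simp add: algebra_simps)
    also have "\<dots> = (P - Q) + (P - Q)" using e5 by (simp add: algebra_simps)
    finally show ?thesis .
  qed
  hence "sc 2 (A - B) = sc 2 (P - Q)" by (simp add: s2)
  hence "sc (1/2) (sc 2 (A - B)) = sc (1/2) (sc 2 (P - Q))" by (rule arg_cong)
  hence "A - B = P - Q" by (simp add: v.scale_scale)
  hence AB: "A = P - Q + B" by (simp only: diff_eq_eq)
  have w: "m z (commutator c x y) = P - Q" unfolding commutator_def P_def Q_def by (rule mdiff)
  have c1: "c y (m z x) = B" unfolding B_def by (simp add: comm)
  have c2: "c x (m z y) = A" unfolding A_def by (simp add: comm)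
  have "sc 2 (P - Q) = (A + A - P - B) + (A - (B + B - Q))" unfolding s2 AB by (simp add: algebra_simps)
  thus ?thesis unfolding w unfolding commutator_def e1 e2 c1 c2 .
qed

lemma add_neg_hom:
  fixes f :: "'u::ab_group_add \<Rightarrow> 'v::ab_group_add"
  assumes "\<And>a b. f (a + b) = f a + f b"
  shows "f (- a) = - f a"
proof -
  have "f (0 - a) = f 0 - f a" by (rule add_diff_hom) (rule assms)
  moreover have "f 0 = 0"
  proof -
    have "f (0 + 0) = f 0 + f 0" by (rule assms)
    thus ?thesis by simp
  qed
  ultimately show ?thesis by simp
qed

lemma apl_lie:
  fixes sc :: "'k::field_char_0 \<Rightarrow> 'v::ab_group_add \<Rightarrow> 'v"
  assumes vs: "vector_space sc" and ap: "anti_pre_lie sc c"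
  shows "lie_alg sc (commutator c)"
proof -
  interpret v: vector_space sc by fact
  have cb: "bilinear_op sc c" using ap unfolding anti_pre_lie_def by blast
  have I1: "\<And>x y z. c x (c y z) - c y (c x z) = c (commutator c y x) z"
    using ap unfolding anti_pre_lie_def by blast
  have I2: "\<And>x y z. c (commutator c x y) z + c (commutator c y z) x + c (commutator c z x) y = 0"
    using ap unfolding anti_pre_lie_def by blast
  have addl: "\<And>x y z. c (x + y) z = c x z + c y z" using cb unfolding bilinear_op_def by blast
  have addr: "\<And>x y z. c x (y + z) = c x y + c x z" using cb unfolding bilinear_op_def by blast
  have scl: "\<And>a x y. c (sc a x) y = sc a (c x y)" using cb unfolding bilinear_op_def by blast
  have scr: "\<And>a x y. c x (sc a y) = sc a (c x y)" using cb unfolding bilinear_op_def by blast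
  have diffl: "\<And>x y z. c (x - y) z = c x z - c y z"
    by (rule add_diff_hom[where f = "\<lambda>u. c u _", simplified]) (rule addl)
  have diffr: "\<And>x y z. c x (y - z) = c x y - c x z"
    by (rule add_diff_hom) (rule addr)
  have negl: "\<And>x z. c (- x) z = - c x z"
    by (rule add_neg_hom[where f = "\<lambda>u. c u _", simplified]) (rule addl)
  have bil: "bilinear_op sc (commutator c)"
    unfolding bilinear_op_def commutator_def
    by (simp add: addl addr scl scr v.scale_right_diff_distrib algebra_simps)
  have jac: "commutator c x (commutator c y z) + commutator c y (commutator c z x)
       + commutator c z (commutator c x y) = 0" for x y z
  proof -
    define X where "X = commutator c x y"
    define Y where "Y = commutator c y z"
    define Z where "Z = commutator c z x"
    have sw: "\<And>a b. commutator c b a = - commutator c a b" unfolding commutator_def by simp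
    have j1: "c x (c y z) = c y (c x z) - c X z" using I1[of x y z, unfolded sw[where a=x and b=y] negl] unfolding X_def
      by (simp add: eq_diff_eq diff_eq_eq)
    have j2: "c y (c z x) = c z (c y x) - c Y x" using I1[of y z x, unfolded sw[where a=y and b=z] negl] unfolding Y_def
      by (simp add: eq_diff_eq diff_eq_eq)
    have j3: "c z (c x y) = c x (c z y) - c Z y" using I1[of z x y, unfolded sw[where a=z and b=x] negl] unfolding Z_def
      by (simp add: eq_diff_eq diff_eq_eq)
    have j4: "c X z = - c Y x - c Z y" using I2[of x y z] unfolding X_def Y_def Z_def
      by (simp add: eq_neg_iff_add_eq_0 algebra_simps)
    have "commutator c x Y + commutator c y Z + commutator c z X =
      c x (c y z) - c x (c z y) - c Y x + c y (c z x) - c y (c x z) - c Z y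
      + c z (c x y) - c z (c y x) - c X z"
      unfolding commutator_def X_def Y_def Z_def diffr by (simp add: algebra_simps)
    also have "\<dots> = 0" unfolding j1 j2 j3 j4 by (simp add: algebra_simps)
    finally show ?thesis unfolding X_def Y_def Z_def .
  qed
  show ?thesis unfolding lie_alg_def using bil jac by (simp add: commutator_def)
qed

theorem proposition3p44:
  fixes sc :: "'k::field_char_0 \<Rightarrow> 'v::ab_group_add \<Rightarrow> 'v"
    and m c :: "'v \<Rightarrow> 'v \<Rightarrow> 'v"
  assumes vs: "vector_space sc"
    and fin: "\<exists>B. finite_dimensional_vector_space sc B"
  shows "(comm_assoc_alg sc m \<and> lie_admissible sc c \<and>
          (\<forall>x y z. sc 2 (m (c x y) z) - sc 2 (m (c y x) z) = m y (c x z) - m x (c y z)) \<and>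
          (\<forall>x y z. sc 2 (c x (m y z)) = c (m z x) y + m z (c x y))
          \<longrightarrow> transposed_poisson sc m (commutator c))
       \<and> (anti_pre_lie_poisson sc m c \<longrightarrow> transposed_poisson sc m (commutator c))"
proof (intro conjI impI)
  assume h: "comm_assoc_alg sc m \<and> lie_admissible sc c \<and>
          (\<forall>x y z. sc 2 (m (c x y) z) - sc 2 (m (c y x) z) = m y (c x z) - m x (c y z)) \<and>
          (\<forall>x y z. sc 2 (c x (m y z)) = c (m z x) y + m z (c x y))"
  hence cb: "bilinear_op sc c" and la: "lie_alg sc (commutator c)"
    unfolding lie_admissible_def by blast+
  show "transposed_poisson sc m (commutator c)"
    unfolding transposed_poisson_def using h la key[OF vs _ cb] by blast
next
  assume h: "anti_pre_lie_poisson sc m c"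
  hence ap: "anti_pre_lie sc c" and cb: "bilinear_op sc c"
    unfolding anti_pre_lie_poisson_def anti_pre_lie_def by blast+
  have la: "lie_alg sc (commutator c)" by (rule apl_lie[OF vs ap])
  show "transposed_poisson sc m (commutator c)"
    using h la key[OF vs _ cb] unfolding transposed_poisson_def anti_pre_lie_poisson_def by blast
qed

end
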